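(* Let $T$ be a tree with positive edge weights rooted at the homebase $r$, and let $q\ge 0$. If a cost-optimal strategy exploring $T$ uses only one agent, then that agent terminates in a leaf of $T$ at maximum distance from $r$.
   Context: Exploration model: given a connected graph with positive edge weights, a homebase vertex, and invoking cost $q\ge 0$, a strategy is a sequence of moves, each either invoking a new agent (appearing at the homebase) or an agent traversing an edge incident to its current vertex. A vertex is explored when first visited; the strategy explores the graph when every vertex has been visited by some agent (agents need not return). With $k$ agents, agent $i$ traversing total distance $d_i$ (weights counted with multiplicity), the cost is $kq+\sum_i d_i$; a strategy is cost-optimal if it explores the graph with minimum cost (off-line setting). Distances are weighted shortest-path distances; a leaf is a non-root vertex with no children. *)

theory Defs
  imports Complex_Main
begin

text \<open>A finite rooted tree with positive edge weights, given by a vertex set V,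
 root (homebase) r, a parent function par (meaningful on V - {r}) and a weight
 function w, where w v is the weight of the edge {v, par v}.  Every vertex
 reaches the root by iterating par, so the parent edges form a tree.\<close>
definition wtree :: "'a set \<Rightarrow> 'a \<Rightarrow> ('a \<Rightarrow> 'a) \<Rightarrow> ('a \<Rightarrow> real) \<Rightarrow> bool" where
  "wtree V r par w \<longleftrightarrow> finite V \<and> r \<in> V \<and>
     (\<forall>v\<in>V - {r}. par v \<in> V \<and> w v > 0) \<and>
     (\<forall>v\<in>V. \<exists>n. (par ^^ n) v = r)"

definition adj :: "'a set \<Rightarrow> 'a \<Rightarrow> ('a \<Rightarrow> 'a) \<Rightarrow> 'a \<Rightarrow> 'a \<Rightarrow> bool" where
  "adj V r par u v \<longleftrightarrow> u \<in> V \<and> v \<in> V \<and>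
     ((u \<noteq> r \<and> par u = v) \<or> (v \<noteq> r \<and> par v = u))"

definition ew :: "'a \<Rightarrow> ('a \<Rightarrow> 'a) \<Rightarrow> ('a \<Rightarrow> real) \<Rightarrow> 'a \<Rightarrow> 'a \<Rightarrow> real" where
  "ew r par w u v = (if u \<noteq> r \<and> par u = v then w u else w v)"

fun is_walk :: "'a set \<Rightarrow> 'a \<Rightarrow> ('a \<Rightarrow> 'a) \<Rightarrow> 'a list \<Rightarrow> bool" where
  "is_walk V r par [] = False"
| "is_walk V r par [u] = (u \<in> V)"
| "is_walk V r par (u # v # xs) = (adj V r par u v \<and> is_walk V r par (v # xs))"

fun walk_len :: "'a \<Rightarrow> ('a \<Rightarrow> 'a) \<Rightarrow> ('a \<Rightarrow> real) \<Rightarrow> 'a list \<Rightarrow> real" where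
  "walk_len r par w [] = 0"
| "walk_len r par w [u] = 0"
| "walk_len r par w (u # v # xs) = ew r par w u v + walk_len r par w (v # xs)"

definition tdist :: "'a set \<Rightarrow> 'a \<Rightarrow> ('a \<Rightarrow> 'a) \<Rightarrow> ('a \<Rightarrow> real) \<Rightarrow> 'a \<Rightarrow> 'a \<Rightarrow> real" where
  "tdist V r par w u v = Inf {walk_len r par w p | p. is_walk V r par p \<and> hd p = u \<and> last p = v}"

definition is_leaf :: "'a set \<Rightarrow> 'a \<Rightarrow> ('a \<Rightarrow> 'a) \<Rightarrow> 'a \<Rightarrow> bool" where
  "is_leaf V r par v \<longleftrightarrow> v \<in> V \<and> v \<noteq> r \<and> \<not> (\<exists>c\<in>V - {r}. par c = v)"

text \<open>Moves: invoke a new agent (placed at the homebase r; agents are numbered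
 0,1,... in order of invocation), or let agent i traverse an edge to vertex u.\<close>
datatype 'a move = Invoke | Traverse nat 'a

text \<open>Strategies are executed from the state with no agents; pos lists agent positions.\<close>
fun valid_strat :: "'a set \<Rightarrow> 'a \<Rightarrow> ('a \<Rightarrow> 'a) \<Rightarrow> 'a list \<Rightarrow> 'a move list \<Rightarrow> bool" where
  "valid_strat V r par pos [] = True"
| "valid_strat V r par pos (Invoke # ms) = valid_strat V r par (pos @ [r]) ms"
| "valid_strat V r par pos (Traverse i u # ms) =
     (i < length pos \<and> adj V r par (pos ! i) u \<and> valid_strat V r par (pos[i := u]) ms)"

fun final_pos :: "'a \<Rightarrow> 'a list \<Rightarrow> 'a move list \<Rightarrow> 'a list" where
  "final_pos r pos [] = pos"
| "final_pos r pos (Invoke # ms) = final_pos r (pos @ [r]) ms"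
| "final_pos r pos (Traverse i u # ms) = final_pos r (pos[i := u]) ms"

fun visited :: "'a \<Rightarrow> 'a move list \<Rightarrow> 'a set" where
  "visited r [] = {}"
| "visited r (Invoke # ms) = insert r (visited r ms)"
| "visited r (Traverse i u # ms) = insert u (visited r ms)"

fun num_agents :: "'a move list \<Rightarrow> nat" where
  "num_agents [] = 0"
| "num_agents (Invoke # ms) = Suc (num_agents ms)"
| "num_agents (Traverse i u # ms) = num_agents ms"

fun travel :: "'a \<Rightarrow> ('a \<Rightarrow> 'a) \<Rightarrow> ('a \<Rightarrow> real) \<Rightarrow> 'a list \<Rightarrow> 'a move list \<Rightarrow> real" where
  "travel r par w pos [] = 0"
| "travel r par w pos (Invoke # ms) = travel r par w (pos @ [r]) ms"
| "travel r par w pos (Traverse i u # ms) =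
     ew r par w (pos ! i) u + travel r par w (pos[i := u]) ms"

definition strat_cost :: "'a \<Rightarrow> ('a \<Rightarrow> 'a) \<Rightarrow> ('a \<Rightarrow> real) \<Rightarrow> real \<Rightarrow> 'a move list \<Rightarrow> real" where
  "strat_cost r par w q S = real (num_agents S) * q + travel r par w [] S"

definition explores :: "'a set \<Rightarrow> 'a \<Rightarrow> ('a \<Rightarrow> 'a) \<Rightarrow> 'a move list \<Rightarrow> bool" where
  "explores V r par S \<longleftrightarrow> valid_strat V r par [] S \<and> V \<subseteq> visited r S"

definition cost_optimal :: "'a set \<Rightarrow> 'a \<Rightarrow> ('a \<Rightarrow> 'a) \<Rightarrow> ('a \<Rightarrow> real) \<Rightarrow> real \<Rightarrow> 'a move list \<Rightarrow> bool" where
  "cost_optimal V r par w q S \<longleftrightarrow> explores V r par S \<and>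
     (\<forall>S'. explores V r par S' \<longrightarrow> strat_cost r par w q S \<le> strat_cost r par w q S')"

end

theory Submission
  imports Defs
begin


lemma is_walk_hd: "is_walk V r par (a # xs) \<Longrightarrow> a \<in> V"
  by (cases xs) (auto simp: adj_def)

lemma is_walk_set: "is_walk V r par p \<Longrightarrow> set p \<subseteq> V"
  by (induction V r par p rule: is_walk.induct) (auto simp: adj_def)

lemma is_walk_ne: "is_walk V r par p \<Longrightarrow> p \<noteq> []"
  by (cases p) auto

lemma walk_split:
  "is_walk V r par (xs @ y # ys) \<longleftrightarrow> is_walk V r par (xs @ [y]) \<and> is_walk V r par (y # ys)"
proof (induction xs)
  case Nil
  then show ?case using is_walk_hd[of V r par y ys] by auto
next
  case (Cons a xs)
  then show ?case by (cases xs) auto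
qed

lemma walk_len_split:
  "walk_len r par w (xs @ y # ys) = walk_len r par w (xs @ [y]) + walk_len r par w (y # ys)"
proof (induction xs)
  case Nil
  then show ?case by auto
next
  case (Cons a xs)
  then show ?case by (cases xs) auto
qed

fun tgt :: "'a move \<Rightarrow> 'a" where
  "tgt (Traverse i u) = u"
| "tgt Invoke = undefined"

lemma strat_of_walk:
  "is_walk V r par (a # ps) \<Longrightarrow> valid_strat V r par [a] (map (Traverse 0) ps)
    \<and> visited r (map (Traverse 0) ps) = set ps
    \<and> travel r par w [a] (map (Traverse 0) ps) = walk_len r par w (a # ps)
    \<and> num_agents (map (Traverse 0) ps) = 0"
proof (induction ps arbitrary: a)
  case Nil
  then show ?case by auto
next
  case (Cons b ps)
  then show ?case by auto
qed

lemma walk_of_strat: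
  "a \<in> V \<Longrightarrow> valid_strat V r par [a] ms \<Longrightarrow> num_agents ms = 0 \<Longrightarrow>
    is_walk V r par (a # map tgt ms) \<and> travel r par w [a] ms = walk_len r par w (a # map tgt ms)
    \<and> visited r ms = set (map tgt ms) \<and> final_pos r [a] ms = [last (a # map tgt ms)]"
proof (induction ms arbitrary: a)
  case Nil
  then show ?case by auto
next
  case (Cons m ms)
  show ?case
  proof (cases m)
    case Invoke
    then show ?thesis using Cons.prems by auto
  next
    case (Traverse i u)
    with Cons.prems have i0: "i = 0" and au: "adj V r par a u" and uV: "u \<in> V" 
      and v: "valid_strat V r par [u] ms" and n: "num_agents ms = 0"
      by (auto simp: adj_def)
    from Cons.IH[OF uV v n] show ?thesis using Traverse i0 au by auto
  qed
qed

lemma strat_shape: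
  "num_agents S = 1 \<Longrightarrow> valid_strat V r par [] S \<Longrightarrow> \<exists>ms. S = Invoke # ms \<and> num_agents ms = 0"
proof (cases S)
  case (Cons m ms)
  then show "num_agents S = 1 \<Longrightarrow> valid_strat V r par [] S \<Longrightarrow> \<exists>ms. S = Invoke # ms \<and> num_agents ms = 0"
    by (cases m) auto
qed auto




definition desc :: "('a \<Rightarrow> 'a) \<Rightarrow> 'a \<Rightarrow> 'a \<Rightarrow> bool" where
  "desc par x v \<longleftrightarrow> (\<exists>n. (par ^^ n) x = v)"

definition child :: "'a \<Rightarrow> ('a \<Rightarrow> 'a) \<Rightarrow> 'a \<Rightarrow> 'a \<Rightarrow> 'a" where
  "child r par a b = (if a \<noteq> r \<and> par a = b then a else b)"

fun cnt :: "'a \<Rightarrow> ('a \<Rightarrow> 'a) \<Rightarrow> 'a \<Rightarrow> 'a list \<Rightarrow> nat" where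
  "cnt r par v (a # b # xs) = (if child r par a b = v then 1 else 0) + cnt r par v (b # xs)"
| "cnt r par v _ = 0"

fun cr :: "('a \<Rightarrow> bool) \<Rightarrow> 'a list \<Rightarrow> nat" where
  "cr P (a # b # xs) = (if P a \<noteq> P b then 1 else 0) + cr P (b # xs)"
| "cr P _ = 0"

lemma cr_bound: "q \<noteq> [] \<Longrightarrow> cr P q \<ge> (if P (hd q) \<noteq> P (last q) then 1
   else if (\<exists>x\<in>set q. P x \<noteq> P (hd q)) then 2 else 0)"
proof (induction P q rule: cr.induct)
  case (1 P a b xs)
  have "(b # xs) \<noteq> []" by simp
  note IH = "1.IH"[OF this]
  have h: "hd (a # b # xs) = a" "last (a # b # xs) = last (b # xs)" "hd (b # xs) = b"
    "set (a # b # xs) = insert a (set (b # xs))" by auto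
  show ?case unfolding h cr.simps using IH
    apply (cases "P a"; cases "P b"; cases "P (last (b # xs))")
    apply (auto split: if_splits)
    done
qed auto

lemma desc_step: "desc par x v \<longleftrightarrow> x = v \<or> desc par (par x) v"
  unfolding desc_def
proof
  assume "\<exists>n. (par ^^ n) x = v"
  then obtain n where n: "(par ^^ n) x = v" by blast
  show "x = v \<or> (\<exists>n. (par ^^ n) (par x) = v)"
  proof (cases n)
    case 0 then show ?thesis using n by simp
  next
    case (Suc m) then show ?thesis using n by (metis funpow_Suc_right o_apply)
  qed
next
  assume "x = v \<or> (\<exists>n. (par ^^ n) (par x) = v)"
  then show "\<exists>n. (par ^^ n) x = v"
    by (metis funpow_0 funpow_Suc_right o_apply)
qed

lemma desc_refl: "desc par v v"
  unfolding desc_def by (metis funpow_0)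

locale tr =
  fixes V :: "'a set" and r :: 'a and par :: "'a \<Rightarrow> 'a" and w :: "'a \<Rightarrow> real"
  assumes wt: "wtree V r par w" and pr: "par r = r"
begin

lemma finV: "finite V" and rV: "r \<in> V" and wpos: "v \<in> V \<Longrightarrow> v \<noteq> r \<Longrightarrow> w v > 0"
  and reach: "v \<in> V \<Longrightarrow> \<exists>n. (par ^^ n) v = r"
  using wt unfolding wtree_def by auto

lemma parV: "v \<in> V \<Longrightarrow> par v \<in> V"
  using wt pr unfolding wtree_def by (cases "v = r") auto

lemma funpow_r: "(par ^^ n) r = r"
  by (induction n) (auto simp: pr)

lemma desc_r: "desc par r v \<Longrightarrow> v = r"
  unfolding desc_def using funpow_r by auto

lemma acyc: assumes "v \<in> V" "v \<noteq> r" shows "\<not> desc par (par v) v"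
proof
  assume "desc par (par v) v"
  then obtain n where n: "(par ^^ n) (par v) = v" unfolding desc_def by blast
  hence n1: "(par ^^ Suc n) v = v" by (metis funpow_Suc_right o_apply)
  define g where "g = par ^^ Suc n"
  have g1: "g v = v" using n1 g_def by simp
  have per0: "(g ^^ k) v = v" for k
    by (induction k) (auto simp: g1)
  have per: "((par ^^ Suc n) ^^ k) v = v" for k using per0 g_def by simp
  obtain m where m: "(par ^^ m) v = r" using reach assms by blast
  have "(par ^^ (Suc n * m)) v = v" using per[of m] by (simp only: funpow_mult)
  moreover have "(par ^^ (Suc n * m)) v = r"
  proof -
    have "Suc n * m = (Suc n * m - m) + m" by simp
    hence "(par ^^ (Suc n * m)) v = (par ^^ (Suc n * m - m)) ((par ^^ m) v)"
      by (metis funpow_add o_apply)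
    thus ?thesis using m funpow_r by simp
  qed
  ultimately show False using assms by simp
qed

definition dep :: "'a \<Rightarrow> real" where
  "dep x = (\<Sum>v\<in>V-{r}. if desc par x v then w v else 0)"

lemma dep_r: "dep r = 0"
  unfolding dep_def by (rule sum.neutral) (auto dest: desc_r)

lemma dep_nonneg: "dep x \<ge> 0"
  unfolding dep_def by (rule sum_nonneg) (auto dest: wpos intro: less_imp_le)

lemma dep_step: assumes "v \<in> V" "v \<noteq> r" shows "dep v = w v + dep (par v)"
proof -
  have "dep v = (\<Sum>u\<in>V-{r}. (if u = v then w u else 0) + (if desc par (par v) u then w u else 0))"
    unfolding dep_def
  proof (rule sum.cong)
    fix u assume "u \<in> V - {r}"
    show "(if desc par v u then w u else 0) = (if u = v then w u else 0) + (if desc par (par v) u then w u else 0)"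
      using desc_step[of par v u] acyc[OF assms] by auto
  qed simp
  also have "\<dots> = w v + dep (par v)"
    unfolding dep_def sum.distrib using assms by (simp add: sum.delta finV)
  finally show ?thesis .
qed

lemma child_in: "adj V r par a b \<Longrightarrow> child r par a b \<in> V - {r}"
  unfolding adj_def child_def by auto

lemma ew_child: "ew r par w a b = w (child r par a b)"
  unfolding ew_def child_def by auto

lemma cross_child: assumes "adj V r par a b" "desc par a v \<noteq> desc par b v"
  shows "child r par a b = v"
proof (cases "a \<noteq> r \<and> par a = b")
  case True
  then show ?thesis using assms(2) desc_step[of par a v] unfolding child_def by auto
next
  case False
  with assms(1) have "b \<noteq> r" "par b = a" unfolding adj_def by auto
  then show ?thesis using False assms(2) desc_step[of par b v] unfolding child_def by auto
qed

lemma sum_ind: "c \<in> V - {r} \<Longrightarrow> (\<Sum>v\<in>V-{r}. w v * real (if c = v then 1 else 0)) = w c"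
proof -
  assume c: "c \<in> V - {r}"
  have "(\<Sum>v\<in>V-{r}. w v * real (if c = v then 1 else 0)) = (\<Sum>v\<in>V-{r}. if c = v then w v else 0)"
    by (rule sum.cong) auto
  also have "\<dots> = w c" using c finV by (simp add: sum.delta')
  finally show ?thesis .
qed

lemma walk_len_cnt: "is_walk V r par p \<Longrightarrow>
   walk_len r par w p = (\<Sum>v\<in>V-{r}. w v * real (cnt r par v p))"
proof (induction p rule: induct_list012)
  case (3 a b xs)
  have ab: "adj V r par a b" and wb: "is_walk V r par (b # xs)" using "3.prems" by auto
  have "walk_len r par w (a # b # xs) = w (child r par a b) + walk_len r par w (b # xs)"
    by (simp add: ew_child)
  also have "\<dots> = (\<Sum>v\<in>V-{r}. w v * real (if child r par a b = v then 1 else 0))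
       + (\<Sum>v\<in>V-{r}. w v * real (cnt r par v (b # xs)))"
    using sum_ind[OF child_in[OF ab]] "3.IH"(2)[OF wb] by simp
  also have "\<dots> = (\<Sum>v\<in>V-{r}. w v * real (cnt r par v (a # b # xs)))"
    unfolding sum.distrib[symmetric] by (rule sum.cong) (auto simp: algebra_simps)
  finally show ?case .
qed auto

lemma cr_le_cnt: "is_walk V r par p \<Longrightarrow> cr (\<lambda>x. desc par x v) p \<le> cnt r par v p"
proof (induction p rule: induct_list012)
  case (3 a b xs)
  have ab: "adj V r par a b" and wb: "is_walk V r par (b # xs)" using "3.prems" by auto
  show ?case using "3.IH"(2)[OF wb] cross_child[OF ab, of v] by auto
qed auto

lemma lower: assumes "is_walk V r par p" "hd p = r"
  shows "walk_len r par w p \<ge> (\<Sum>v\<in>V-{r}. w v * (if desc par (last p) v then 1 else if v \<in> set p then 2 else 0))"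
proof -
  have "(\<Sum>v\<in>V-{r}. w v * (if desc par (last p) v then 1 else if v \<in> set p then 2 else 0))
     \<le> (\<Sum>v\<in>V-{r}. w v * real (cnt r par v p))"
  proof (rule sum_mono)
    fix v assume v: "v \<in> V - {r}"
    have ne: "p \<noteq> []" using assms(1) by (rule is_walk_ne)
    have nr: "\<not> desc par (hd p) v" using assms(2) desc_r[of v] v by auto
    have b: "cr (\<lambda>x. desc par x v) p \<ge> (if desc par (last p) v then 1 else if v \<in> set p then 2 else 0)"
      using cr_bound[OF ne, of "\<lambda>x. desc par x v"] nr desc_refl[of par v]
      by (auto split: if_splits)
    have "(if desc par (last p) v then 1 else if v \<in> set p then 2 else 0) \<le> real (cnt r par v p)"
      using b cr_le_cnt[OF assms(1), of v]
      by (auto split: if_splits)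
    then show "w v * (if desc par (last p) v then 1 else if v \<in> set p then 2 else 0) \<le> w v * real (cnt r par v p)"
      using wpos[of v] v by (intro mult_left_mono) auto
  qed
  then show ?thesis using walk_len_cnt[OF assms(1)] by linarith
qed

lemma lower_dist: assumes "is_walk V r par p" "hd p = r" shows "walk_len r par w p \<ge> dep (last p)"
proof -
  have "dep (last p) \<le> (\<Sum>v\<in>V-{r}. w v * (if desc par (last p) v then 1 else if v \<in> set p then 2 else 0))"
    unfolding dep_def
  proof (rule sum_mono)
    fix v assume "v \<in> V - {r}"
    then have "w v > 0" by (simp add: wpos)
    then show "(if desc par (last p) v then w v else 0) \<le> w v * (if desc par (last p) v then 1 else if v \<in> set p then 2 else 0)"
      by auto
  qed
  then show ?thesis using lower[OF assms] by simp
qed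

definition W :: "'a set \<Rightarrow> real" where "W U = (\<Sum>v\<in>U-{r}. w v)"

lemma lower_cover: assumes "is_walk V r par p" "hd p = r" "V \<subseteq> set p"
  shows "walk_len r par w p \<ge> 2 * W V - dep (last p)"
proof -
  have "(\<Sum>v\<in>V-{r}. w v * (if desc par (last p) v then 1 else if v \<in> set p then 2 else 0))
     = (\<Sum>v\<in>V-{r}. 2 * w v - (if desc par (last p) v then w v else 0))"
    using assms(3) by (intro sum.cong) auto
  also have "\<dots> = 2 * W V - dep (last p)"
    unfolding W_def dep_def sum_subtractf sum_distrib_left by simp
  finally show ?thesis using lower[OF assms(1,2)] by simp
qed

end



context tr begin

lemma adj_par: "l \<in> V \<Longrightarrow> l \<noteq> r \<Longrightarrow> adj V r par (par l) l \<and> adj V r par l (par l)"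
  unfolding adj_def using parV by auto

lemma ew_up: "l \<noteq> r \<Longrightarrow> ew r par w l (par l) = w l"
  unfolding ew_def by auto

lemma ew_down: assumes "l \<in> V" "l \<noteq> r" shows "ew r par w (par l) l = w l"
proof -
  have "\<not> (par (par l) = l)"
  proof
    assume "par (par l) = l"
    hence "desc par (par l) l" unfolding desc_def by (metis funpow_0 funpow_Suc_right o_apply)
    thus False using acyc[OF assms] by simp
  qed
  thus ?thesis unfolding ew_def by auto
qed

lemma par_ne: "l \<in> V \<Longrightarrow> l \<noteq> r \<Longrightarrow> par l \<noteq> l"
  using acyc[of l] desc_refl[of par l] by auto

lemma build: "U \<subseteq> V \<Longrightarrow> r \<in> U \<Longrightarrow> (\<forall>u\<in>U-{r}. par u \<in> U) \<Longrightarrow> x \<in> U \<Longrightarrow>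
  \<exists>p. is_walk V r par p \<and> hd p = r \<and> last p = x \<and> set p = U \<and> walk_len r par w p \<le> 2 * W U - dep x"
proof (induction "card U" arbitrary: U x rule: less_induct)
  case less
  have finU: "finite U" using less.prems(1) finV finite_subset by blast
  show ?case
  proof (cases "U = {r}")
    case True
    then have "x = r" using less.prems by auto
    then show ?thesis using True rV by (intro exI[of _ "[r]"]) (auto simp: W_def dep_r)
  next
    case False
    then have ne: "U - {r} \<noteq> {}" using less.prems(2) by auto
    have "Max (dep ` (U - {r})) \<in> dep ` (U - {r})" using finU ne by (intro Max_in) auto
    then obtain l where l: "l \<in> U - {r}" and lm: "dep l = Max (dep ` (U - {r}))" by (metis imageE)
    have lmax: "\<forall>u\<in>U-{r}. dep u \<le> dep l"
    proof
      fix u assume "u \<in> U - {r}"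
      then have "dep u \<le> Max (dep ` (U - {r}))" using finU by (intro Max_ge) auto
      then show "dep u \<le> dep l" using lm by simp
    qed
    have lV: "l \<in> V" "l \<noteq> r" using l less.prems(1) by auto
    define U0 where "U0 = U - {l}"
    have U0V: "U0 \<subseteq> V" using less.prems(1) U0_def by auto
    have rU0: "r \<in> U0" using less.prems(2) l U0_def by auto
    have clos: "\<forall>u\<in>U0-{r}. par u \<in> U0"
    proof
      fix u assume u: "u \<in> U0 - {r}"
      have uV: "u \<in> V" "u \<noteq> r" using u U0V by auto
      have "par u \<noteq> l"
      proof
        assume "par u = l"
        then have "dep u = w u + dep l" using dep_step[OF uV] by simp
        moreover have "dep u \<le> dep l" using lmax u U0_def by auto
        ultimately show False using wpos[OF uV] by simp
      qed
      then show "par u \<in> U0" using less.prems(3) u U0_def by auto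
    qed
    have card: "card U0 < card U" using finU l U0_def card_gt_0_iff[of U] by auto
    have pl: "par l \<in> U0" using less.prems(3) l par_ne[OF lV] U0_def by auto
    have WU: "W U = W U0 + w l"
    proof -
      have "U0 - {r} = (U - {r}) - {l}" using U0_def by auto
      moreover have "W U = w l + sum w ((U-{r})-{l})" unfolding W_def using l finU
        by (intro sum.remove) auto
      ultimately show ?thesis unfolding W_def by simp
    qed
    have dl: "dep l = w l + dep (par l)" using dep_step[OF lV] .
    have UU: "U = insert l U0" using U0_def l by auto
    show ?thesis
    proof (cases "x = l")
      case True
      obtain p0 where p0: "is_walk V r par p0" "hd p0 = r" "last p0 = par l" "set p0 = U0"
        "walk_len r par w p0 \<le> 2 * W U0 - dep (par l)"
        using less.hyps[OF card U0V rU0 clos pl] by blast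
      have ne0: "p0 \<noteq> []" using p0(1) by (rule is_walk_ne)
      define as where "as = butlast p0"
      have p0e: "p0 = as @ [par l]" using append_butlast_last_id[OF ne0] p0(3) as_def by simp
      define p where "p = as @ par l # [l]"
      have wp: "is_walk V r par p"
        unfolding p_def using walk_split[of V r par as "par l" "[l]"] p0(1) p0e adj_par[OF lV] lV by simp
      have lp: "walk_len r par w p = walk_len r par w p0 + w l"
        unfolding p_def using walk_len_split[of r par w as "par l" "[l]"] p0e ew_down[OF lV] by simp
      have "hd p = r" using p0(2) p0e unfolding p_def by (cases as) auto
      moreover have "last p = x" using True p_def by simp
      moreover have "set p = U" using p0(4) p0e UU unfolding p_def by auto
      moreover have "walk_len r par w p \<le> 2 * W U - dep x" unfolding True using lp p0(5) WU dl by linarith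
      ultimately show ?thesis using wp by blast
    next
      case False
      then have xU0: "x \<in> U0" using less.prems(4) U0_def by auto
      obtain p0 where p0: "is_walk V r par p0" "hd p0 = r" "last p0 = x" "set p0 = U0"
        "walk_len r par w p0 \<le> 2 * W U0 - dep x"
        using less.hyps[OF card U0V rU0 clos xU0] by blast
      obtain as bs where p0e: "p0 = as @ par l # bs" using pl p0(4) split_list by metis
      define p where "p = as @ par l # l # par l # bs"
      have w1: "is_walk V r par (as @ [par l])" "is_walk V r par (par l # bs)"
        using p0(1) p0e walk_split[of V r par as "par l" bs] by simp_all
      have wp: "is_walk V r par p"
        unfolding p_def using walk_split[of V r par as "par l" "l # par l # bs"] w1 adj_par[OF lV] by simp
      have lp: "walk_len r par w p = walk_len r par w p0 + 2 * w l"
        unfolding p_def p0e using walk_len_split[of r par w as "par l" "l # par l # bs"]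
          walk_len_split[of r par w as "par l" bs] ew_down[OF lV] ew_up[OF lV(2)] by simp
      have "hd p = r" using p0(2) p0e unfolding p_def by (cases as) auto
      moreover have "last p = x" using p0(3) p0e unfolding p_def by (cases bs) auto
      moreover have "set p = U" using p0(4) p0e UU unfolding p_def by auto
      moreover have "walk_len r par w p \<le> 2 * W U - dep x" using lp p0(5) WU by linarith
      ultimately show ?thesis using wp by blast
    qed
  qed
qed

end



context tr begin

lemma W_anc: assumes "v \<in> V" shows "W {u \<in> V. desc par v u} = dep v"
proof -
  have "{u \<in> V. desc par v u} - {r} = {u \<in> V - {r}. desc par v u}" by auto
  moreover have "sum w {u \<in> V - {r}. desc par v u} = (\<Sum>u\<in>V-{r}. if desc par v u then w u else 0)"
    using finV by (intro sum.inter_filter) auto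
  ultimately show ?thesis unfolding W_def dep_def by simp
qed

lemma path_walk: assumes "v \<in> V"
  shows "\<exists>p. is_walk V r par p \<and> hd p = r \<and> last p = v \<and> walk_len r par w p \<le> dep v"
proof -
  define U where "U = {u \<in> V. desc par v u}"
  have h1: "U \<subseteq> V" unfolding U_def by auto
  have h2: "r \<in> U" using reach[OF assms] rV unfolding U_def desc_def by auto
  have h3: "\<forall>u\<in>U-{r}. par u \<in> U"
  proof
    fix u assume u: "u \<in> U - {r}"
    then obtain n where "(par ^^ n) v = u" unfolding U_def desc_def by auto
    then have "(par ^^ Suc n) v = par u" by simp
    then show "par u \<in> U" using u parV unfolding U_def desc_def by blast
  qed
  have h4: "v \<in> U" using assms desc_refl[of par v] unfolding U_def by simp
  obtain p where "is_walk V r par p \<and> hd p = r \<and> last p = v \<and> set p = U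
     \<and> walk_len r par w p \<le> 2 * W U - dep v" using build[OF h1 h2 h3 h4] by (elim exE)
  moreover have "W U = dep v" using W_anc[OF assms] U_def by simp
  ultimately show ?thesis by (intro exI[of _ p]) simp
qed

lemma tdist_eq: assumes "v \<in> V" shows "tdist V r par w r v = dep v"
proof -
  define A where "A = {walk_len r par w p | p. is_walk V r par p \<and> hd p = r \<and> last p = v}"
  obtain p where p: "is_walk V r par p" "hd p = r" "last p = v" "walk_len r par w p \<le> dep v"
    using path_walk[OF assms] by blast
  have lb: "\<forall>a\<in>A. dep v \<le> a" unfolding A_def using lower_dist by auto
  have inA: "walk_len r par w p \<in> A" unfolding A_def using p by auto
  have "Inf A \<le> walk_len r par w p" using lb inA by (intro cInf_lower) (auto simp: bdd_below_def)
  moreover have "dep v \<le> Inf A" using inA lb by (intro cInf_greatest) auto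
  moreover have "walk_len r par w p \<ge> dep v" using lb inA by auto
  ultimately have "Inf A = dep v" using p(4) by linarith
  then show ?thesis unfolding tdist_def A_def .
qed

lemma core:
  assumes "V \<noteq> {r}" and "cost_optimal V r par w q S" and "num_agents S = 1"
  shows "is_leaf V r par (final_pos r [] S ! 0) \<and>
         (\<forall>v\<in>V. tdist V r par w r v \<le> tdist V r par w r (final_pos r [] S ! 0))"
proof -
  have ex: "explores V r par S" and opt: "\<And>S'. explores V r par S' \<Longrightarrow> strat_cost r par w q S \<le> strat_cost r par w q S'"
    using assms(2) unfolding cost_optimal_def by auto
  have vs: "valid_strat V r par [] S" and cov: "V \<subseteq> visited r S" using ex unfolding explores_def by auto
  obtain ms where S: "S = Invoke # ms" and n0: "num_agents ms = 0"
    using strat_shape[OF assms(3) vs] by blast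
  have vs1: "valid_strat V r par [r] ms" using vs S by simp
  define p where "p = r # map tgt ms"
  have wo: "is_walk V r par p \<and> travel r par w [r] ms = walk_len r par w p
    \<and> visited r ms = set (map tgt ms) \<and> final_pos r [r] ms = [last p]"
    using walk_of_strat[OF rV vs1 n0, of w] unfolding p_def by blast
  define e where "e = last p"
  have fe: "final_pos r [] S ! 0 = e" using wo S unfolding e_def by simp
  have wp: "is_walk V r par p" using wo by blast
  have hp: "hd p = r" unfolding p_def by simp
  have Vp: "V \<subseteq> set p" using cov wo S unfolding p_def by auto
  have cS: "strat_cost r par w q S = q + walk_len r par w p"
    using wo S n0 unfolding strat_cost_def by simp
  have "last p \<in> set p" using is_walk_ne[OF wp] by simp
  then have eV: "e \<in> V" using is_walk_set[OF wp] e_def by blast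
  have low: "walk_len r par w p \<ge> 2 * W V - dep e" using lower_cover[OF wp hp Vp] e_def by simp
  have depmax: "dep x \<le> dep e" if xV: "x \<in> V" for x
  proof -
    obtain p' where p': "is_walk V r par p'" "hd p' = r" "last p' = x" "set p' = V"
      "walk_len r par w p' \<le> 2 * W V - dep x"
      using build[of V x] rV parV xV by auto
    have ne': "p' \<noteq> []" using p'(1) by (rule is_walk_ne)
    have p'e: "p' = r # tl p'" using ne' p'(2) by (cases p') auto
    define S' where "S' = Invoke # map (Traverse 0) (tl p')"
    have so: "valid_strat V r par [r] (map (Traverse 0) (tl p'))
      \<and> visited r (map (Traverse 0) (tl p')) = set (tl p')
      \<and> travel r par w [r] (map (Traverse 0) (tl p')) = walk_len r par w (r # tl p')
      \<and> num_agents (map (Traverse 0) (tl p')) = 0"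
      using strat_of_walk[of V r par r "tl p'" w] p'(1) p'e by simp
    have "set p' = insert r (set (tl p'))" using p'e by (metis list.simps(15))
    then have "explores V r par S'"
      unfolding explores_def S'_def using so p'(4) by simp
    then have "strat_cost r par w q S \<le> strat_cost r par w q S'" by (rule opt)
    moreover have "strat_cost r par w q S' = q + walk_len r par w p'"
      unfolding strat_cost_def S'_def using so p'e by simp
    ultimately show ?thesis using cS low p'(5) by linarith
  qed
  obtain x where xV: "x \<in> V" "x \<noteq> r" using assms(1) rV by blast
  have "dep x > 0" using dep_step[OF xV] wpos[OF xV] dep_nonneg[of "par x"] by linarith
  then have er: "e \<noteq> r" using depmax[OF xV(1)] dep_r by auto
  have nochild: "\<not> (\<exists>c\<in>V - {r}. par c = e)"
  proof
    assume "\<exists>c\<in>V - {r}. par c = e"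
    then obtain c where c: "c \<in> V" "c \<noteq> r" "par c = e" by blast
    have "dep c = w c + dep e" using dep_step[OF c(1,2)] c(3) by simp
    then show False using depmax[OF c(1)] wpos[OF c(1,2)] by linarith
  qed
  have leaf: "is_leaf V r par e" unfolding is_leaf_def using eV er nochild by blast
  have "\<forall>v\<in>V. tdist V r par w r v \<le> tdist V r par w r e"
    using tdist_eq depmax eV by simp
  then show ?thesis using leaf fe by simp
qed

end



context
  fixes V :: "'a set" and r :: 'a and p1 p2 :: "'a \<Rightarrow> 'a"
  assumes agree: "\<forall>u. u \<noteq> r \<longrightarrow> p1 u = p2 u"
begin

lemma adj_eq: "adj V r p1 = adj V r p2"
  using agree unfolding adj_def by (intro ext) auto

lemma ew_eq: "ew r p1 w = ew r p2 w"
  using agree unfolding ew_def by (intro ext) auto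

lemma walk_eq: "is_walk V r p1 p = is_walk V r p2 p"
  by (induction p rule: induct_list012) (auto simp: adj_eq)

lemma wlen_eq: "walk_len r p1 w p = walk_len r p2 w p"
  by (induction p rule: induct_list012) (auto simp: ew_eq)

lemma vs_eq: "valid_strat V r p1 pos ms = valid_strat V r p2 pos ms"
proof (induction ms arbitrary: pos)
  case (Cons m ms)
  then show ?case by (cases m) (auto simp: adj_eq)
qed simp

lemma travel_eq: "travel r p1 w pos ms = travel r p2 w pos ms"
proof (induction ms arbitrary: pos)
  case (Cons m ms)
  then show ?case by (cases m) (auto simp: ew_eq)
qed simp

lemma tdist_eq2: "tdist V r p1 w = tdist V r p2 w"
  unfolding tdist_def by (simp add: walk_eq wlen_eq)

lemma copt_eq: "cost_optimal V r p1 w q = cost_optimal V r p2 w q"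
  unfolding cost_optimal_def explores_def strat_cost_def by (simp add: vs_eq travel_eq)

lemma leaf_eq: "is_leaf V r p1 = is_leaf V r p2"
  using agree unfolding is_leaf_def by (intro ext) auto

end

lemma wtree_fix: assumes "wtree V r par w" shows "wtree V r (par(r := r)) w"
proof -
  have reach': "\<exists>k. ((par(r := r)) ^^ k) v = r" if "(par ^^ n) v = r" for n v
    using that
  proof (induction n arbitrary: v)
    case 0 then show ?case by (metis funpow_0)
  next
    case (Suc n)
    show ?case
    proof (cases "v = r")
      case True then show ?thesis by (metis funpow_0)
    next
      case False
      have "(par ^^ n) (par v) = r" using Suc.prems by (metis funpow_Suc_right o_apply)
      then obtain k where "((par(r := r)) ^^ k) (par v) = r" using Suc.IH by blast
      moreover have "(par(r := r)) v = par v" using False by simp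
      moreover have "((par(r := r)) ^^ Suc k) v = ((par(r := r)) ^^ k) ((par(r := r)) v)"
        by (simp only: funpow_Suc_right o_apply)
      ultimately have "((par(r := r)) ^^ Suc k) v = r" by simp
      then show ?thesis by blast
    qed
  qed
  show ?thesis using assms reach' unfolding wtree_def by auto
qed

theorem mainTheorem8:
  fixes V :: "'a set" and r :: 'a and par :: "'a \<Rightarrow> 'a" and w :: "'a \<Rightarrow> real"
    and q :: real and S :: "'a move list"
  assumes "wtree V r par w"
    and "V \<noteq> {r}"
    and "q \<ge> 0"
    and "cost_optimal V r par w q S"
    and "num_agents S = 1"
  shows "is_leaf V r par (final_pos r [] S ! 0) \<and>
         (\<forall>v\<in>V. tdist V r par w r v \<le> tdist V r par w r (final_pos r [] S ! 0))"
proof -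
  define par' where "par' = par(r := r)"
  have ag: "\<forall>u. u \<noteq> r \<longrightarrow> par' u = par u" unfolding par'_def by simp
  interpret T: tr V r par' w
    by unfold_locales (auto simp: par'_def intro: wtree_fix[OF assms(1), unfolded par'_def])
  have "cost_optimal V r par' w q S" using assms(4) copt_eq[OF ag] by simp
  from T.core[OF assms(2) this assms(5)] show ?thesis
    using leaf_eq[OF ag] tdist_eq2[OF ag] by simp
qed


end
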